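(* Let $K$ be a field of characteristic zero, $(\mathfrak{g},s)$ a finite-dimensional solvable Lie algebra with filtration over $K$, $f\in\mathfrak{g}^*$, and $\pi:\mathfrak{g}^*\to\mathfrak{pv}(f)^*$ the restriction map. Then the $\mathfrak{R}$-equivalence class of $f$ is $\mathfrak{R}(f)=\pi^{-1}\pi(f)=\{g\in\mathfrak{g}^*\mid g|_{\mathfrak{pv}(f)}=f|_{\mathfrak{pv}(f)}\}$; in particular, every $g\in\mathfrak{g}^*$ with $g|_{\mathfrak{pv}(f)}=f|_{\mathfrak{pv}(f)}$ satisfies $\mathfrak{pv}(g)=\mathfrak{pv}(f)$.
   Context: A filtration $s$ on $\mathfrak{g}$ is a chain $\mathfrak{g}=\mathfrak{g}_0\supseteq\mathfrak{g}_1\supseteq\dots\supseteq\mathfrak{g}_k=\{0\}$ of ideals of $\mathfrak{g}$ with $\dim\mathfrak{g}_{i-1}/\mathfrak{g}_i\le1$. For $f\in\mathfrak{g}^*$: $f_i=f|_{\mathfrak{g}_i}$, $\mathfrak{g}_i^{f_i}=\{x\in\mathfrak{g}_i\mid f([x,\mathfrak{g}_i])=0\}$, and $\mathfrak{pv}(f)=\sum_{i=0}^k\mathfrak{g}_i^{f_i}$ is the Vergne polarization. The equivalence relation $\mathfrak{R}$ on $\mathfrak{g}^*$: $f'\,\mathfrak{R}\,f''$ iff $\mathfrak{pv}(f')=\mathfrak{pv}(f'')$ and $f'|_{\mathfrak{pv}(f')}=f''|_{\mathfrak{pv}(f')}$; $\mathfrak{R}(f)$ denotes the class of $f$. *)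

theory Defs
  imports Complex_Main
begin

definition lie_algebra :: "('k::field \<Rightarrow> 'v::ab_group_add \<Rightarrow> 'v) \<Rightarrow> ('v \<Rightarrow> 'v \<Rightarrow> 'v) \<Rightarrow> bool" where
  "lie_algebra scale br \<longleftrightarrow>
     vector_space scale \<and>
     (\<forall>x. Vector_Spaces.linear scale scale (br x)) \<and>
     (\<forall>y. Vector_Spaces.linear scale scale (\<lambda>x. br x y)) \<and>
     (\<forall>x. br x x = 0) \<and>
     (\<forall>x y z. br x (br y z) + br y (br z x) + br z (br x y) = 0)"

definition fin_dim :: "('k::field \<Rightarrow> 'v::ab_group_add \<Rightarrow> 'v) \<Rightarrow> bool" where
  "fin_dim scale \<longleftrightarrow> (\<exists>B. finite B \<and> module.span scale B = UNIV)"

fun derived :: "('k::field \<Rightarrow> 'v::ab_group_add \<Rightarrow> 'v) \<Rightarrow> ('v \<Rightarrow> 'v \<Rightarrow> 'v) \<Rightarrow> nat \<Rightarrow> 'v set" where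
  "derived scale br 0 = UNIV"
| "derived scale br (Suc n) =
     module.span scale {br x y | x y. x \<in> derived scale br n \<and> y \<in> derived scale br n}"

definition solvable :: "('k::field \<Rightarrow> 'v::ab_group_add \<Rightarrow> 'v) \<Rightarrow> ('v \<Rightarrow> 'v \<Rightarrow> 'v) \<Rightarrow> bool" where
  "solvable scale br \<longleftrightarrow> (\<exists>n. derived scale br n = {0})"

definition lie_ideal :: "('k::field \<Rightarrow> 'v::ab_group_add \<Rightarrow> 'v) \<Rightarrow> ('v \<Rightarrow> 'v \<Rightarrow> 'v) \<Rightarrow> 'v set \<Rightarrow> bool" where
  "lie_ideal scale br I \<longleftrightarrow> module.subspace scale I \<and> (\<forall>x y. y \<in> I \<longrightarrow> br x y \<in> I)"

definition filtration :: "('k::field \<Rightarrow> 'v::ab_group_add \<Rightarrow> 'v) \<Rightarrow> ('v \<Rightarrow> 'v \<Rightarrow> 'v) \<Rightarrow> (nat \<Rightarrow> 'v set) \<Rightarrow> nat \<Rightarrow> bool" where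
  "filtration scale br gs k \<longleftrightarrow>
     gs 0 = UNIV \<and> gs k = {0} \<and>
     (\<forall>i\<le>k. lie_ideal scale br (gs i)) \<and>
     (\<forall>i<k. gs (Suc i) \<subseteq> gs i \<and>
            vector_space.dim scale (gs i) \<le> vector_space.dim scale (gs (Suc i)) + 1)"

definition dual :: "('k::field \<Rightarrow> 'v::ab_group_add \<Rightarrow> 'v) \<Rightarrow> ('v \<Rightarrow> 'k) set" where
  "dual scale = {f. Vector_Spaces.linear scale (*) f}"

definition stab :: "('v \<Rightarrow> 'v \<Rightarrow> 'v) \<Rightarrow> 'v set \<Rightarrow> ('v \<Rightarrow> 'k::field) \<Rightarrow> 'v set" where
  "stab br G f = {x \<in> G. \<forall>y\<in>G. f (br x y) = 0}"

text \<open>Vergne polarization: pv(f) = sum_{i=0}^k g_i^{f_i} (sum of subspaces = span of union).\<close>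
definition pv :: "('k::field \<Rightarrow> 'v::ab_group_add \<Rightarrow> 'v) \<Rightarrow> ('v \<Rightarrow> 'v \<Rightarrow> 'v) \<Rightarrow> (nat \<Rightarrow> 'v set) \<Rightarrow> nat \<Rightarrow> ('v \<Rightarrow> 'k) \<Rightarrow> 'v set" where
  "pv scale br gs k f = module.span scale (\<Union>i\<in>{0..k}. stab br (gs i) f)"

definition relR :: "('k::field \<Rightarrow> 'v::ab_group_add \<Rightarrow> 'v) \<Rightarrow> ('v \<Rightarrow> 'v \<Rightarrow> 'v) \<Rightarrow> (nat \<Rightarrow> 'v set) \<Rightarrow> nat \<Rightarrow> ('v \<Rightarrow> 'k) \<Rightarrow> ('v \<Rightarrow> 'k) \<Rightarrow> bool" where
  "relR scale br gs k f' f'' \<longleftrightarrow>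
     pv scale br gs k f' = pv scale br gs k f'' \<and> (\<forall>x\<in>pv scale br gs k f'. f' x = f'' x)"

definition classR :: "('k::field \<Rightarrow> 'v::ab_group_add \<Rightarrow> 'v) \<Rightarrow> ('v \<Rightarrow> 'v \<Rightarrow> 'v) \<Rightarrow> (nat \<Rightarrow> 'v set) \<Rightarrow> nat \<Rightarrow> ('v \<Rightarrow> 'k) \<Rightarrow> ('v \<Rightarrow> 'k) set" where
  "classR scale br gs k f = {g \<in> dual scale. relR scale br gs k g f}"

end

theory Submission
  imports Defs
begin

locale LF = finite_dimensional_vector_space scale Basis
  for scale :: "'k::field \<Rightarrow> 'v::ab_group_add \<Rightarrow> 'v" and Basis :: "'v set" +
  fixes br :: "'v \<Rightarrow> 'v \<Rightarrow> 'v" and gs :: "nat \<Rightarrow> 'v set" and k :: nat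
  assumes br_addL: "br (x + y) z = br x z + br y z"
    and br_addR: "br x (y + z) = br x y + br x z"
    and br_scaleL: "br (scale c x) y = scale c (br x y)"
    and br_scaleR: "br x (scale c y) = scale c (br x y)"
    and br_self: "br x x = 0"
    and jacobi: "br x (br y z) + br y (br z x) + br z (br x y) = 0"
    and gs0: "gs 0 = UNIV" and gsk: "gs k = {0}"
    and gs_sub: "i \<le> k \<Longrightarrow> subspace (gs i)"
    and gs_ideal: "i \<le> k \<Longrightarrow> y \<in> gs i \<Longrightarrow> br x y \<in> gs i"
    and gs_mono: "i < k \<Longrightarrow> gs (Suc i) \<subseteq> gs i"
    and gs_dim: "i < k \<Longrightarrow> dim (gs i) \<le> dim (gs (Suc i)) + 1"
begin

definition lf :: "('v \<Rightarrow> 'k) \<Rightarrow> bool" where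
  "lf f \<longleftrightarrow> (\<forall>x y. f (x + y) = f x + f y) \<and> (\<forall>c x. f (scale c x) = c * f x)"

lemma lf_add: "lf f \<Longrightarrow> f (x + y) = f x + f y" by (simp add: lf_def)
lemma lf_scale: "lf f \<Longrightarrow> f (scale c x) = c * f x" by (simp add: lf_def)
lemma lf_0: "lf f \<Longrightarrow> f 0 = 0"
  using lf_scale[of f 0 0] by simp
lemma lf_neg: "lf f \<Longrightarrow> f (- x) = - f x"
  using lf_add[of f x "- x"] lf_0[of f] by (metis add.commute eq_neg_iff_add_eq_0 add.right_inverse)
lemma lf_diff: "lf f \<Longrightarrow> f (x - y) = f x - f y"
  using lf_add[of f x "- y"] lf_neg[of f y] by simp

lemma br_0L: "br 0 y = 0" using br_addL[of 0 0 y] by simp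
lemma br_0R: "br x 0 = 0" using br_addR[of x 0 0] by simp
lemma br_negL: "br (- x) y = - br x y"
  using br_addL[of x "- x" y] br_0L by (metis add.commute eq_neg_iff_add_eq_0 add.right_inverse)
lemma br_negR: "br x (- y) = - br x y"
  using br_addR[of x y "- y"] br_0R by (metis add.commute eq_neg_iff_add_eq_0 add.right_inverse)
lemma br_diffL: "br (x - y) z = br x z - br y z"
  using br_addL[of x "- y" z] br_negL by simp
lemma br_diffR: "br x (y - z) = br x y - br x z"
  using br_addR[of x y "- z"] br_negR by simp
lemma br_anti: "br x y = - br y x"
proof -
  have "br (x + y) (x + y) = br x x + br x y + (br y x + br y y)" by (simp only: br_addL br_addR) (simp add: ac_simps)
  then have "br x y + br y x = 0" by (simp add: br_self)
  then show ?thesis by (simp add: eq_neg_iff_add_eq_0)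
qed

lemma gs_anti: "i \<le> j \<Longrightarrow> j \<le> k \<Longrightarrow> gs j \<subseteq> gs i"
proof (induction j)
  case 0 then show ?case by simp
next
  case (Suc j)
  then show ?case
    by (metis Suc_le_eq gs_mono le_Suc_eq less_imp_le_nat order_refl order_trans)
qed

definition V :: "nat \<Rightarrow> ('v \<Rightarrow> 'k) \<Rightarrow> 'v set" where
  "V i f = stab br (gs i) f"

definition Q :: "nat \<Rightarrow> ('v \<Rightarrow> 'k) \<Rightarrow> 'v set" where
  "Q i f = span (\<Union>j\<in>{i..k}. V j f)"

lemma V_sub: "V i f \<subseteq> gs i" by (auto simp: V_def stab_def)

lemma V_mem: "x \<in> V i f \<longleftrightarrow> x \<in> gs i \<and> (\<forall>y\<in>gs i. f (br x y) = 0)"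
  by (simp add: V_def stab_def)

lemma Q_sub: "i \<le> k \<Longrightarrow> Q i f \<subseteq> gs i"
proof -
  assume ik: "i \<le> k"
  have "(\<Union>j\<in>{i..k}. V j f) \<subseteq> gs i"
  proof
    fix x assume "x \<in> (\<Union>j\<in>{i..k}. V j f)"
    then obtain j where j: "i \<le> j" "j \<le> k" "x \<in> V j f" by auto
    then have "x \<in> gs j" using V_sub by blast
    then show "x \<in> gs i" using gs_anti[OF j(1,2)] by blast
  qed
  then show ?thesis unfolding Q_def using span_minimal gs_sub[OF ik] by blast
qed

lemma Q_step: "i < k \<Longrightarrow> Q i f = span (V i f \<union> Q (Suc i) f)"
proof -
  assume "i < k"
  then have "(\<Union>j\<in>{i..k}. V j f) = V i f \<union> (\<Union>j\<in>{Suc i..k}. V j f)"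
  proof (intro equalityI subsetI)
    fix x assume "x \<in> (\<Union>j\<in>{i..k}. V j f)"
    then obtain j where "j \<in> {i..k}" "x \<in> V j f" by blast
    then show "x \<in> V i f \<union> (\<Union>j\<in>{Suc i..k}. V j f)"
      by (cases "j = i") auto
  next
    fix x assume "x \<in> V i f \<union> (\<Union>j\<in>{Suc i..k}. V j f)"
    then show "x \<in> (\<Union>j\<in>{i..k}. V j f)"
      using \<open>i < k\<close> by (auto intro: bexI[of _ i])
  qed
  moreover have "span (V i f \<union> span (\<Union>j\<in>{Suc i..k}. V j f)) = span (V i f \<union> (\<Union>j\<in>{Suc i..k}. V j f))"
    by (simp only: span_Un span_span)
  ultimately show ?thesis
    unfolding Q_def by (simp only:)
qed

lemma Q_mono: "i < k \<Longrightarrow> Q (Suc i) f \<subseteq> Q i f"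
proof -
  assume ik: "i < k"
  have "Q (Suc i) f \<subseteq> V i f \<union> Q (Suc i) f" by blast
  also have "\<dots> \<subseteq> span (V i f \<union> Q (Suc i) f)" by (rule span_superset)
  finally show ?thesis using Q_step[OF ik] by simp
qed

lemma V_Q: "i \<le> k \<Longrightarrow> V i f \<subseteq> Q i f"
  unfolding Q_def using span_superset by fastforce


lemma V_bracket:
  assumes f: "lf f" and il: "i \<le> l" and lk: "l \<le> k" and x: "x \<in> V i f" and z: "z \<in> V l f"
  shows "br x z \<in> V l f"
proof -
  have zl: "z \<in> gs l" using z V_sub by blast
  have xz: "br x z \<in> gs l" using gs_ideal[OF lk zl] .
  have sub: "gs l \<subseteq> gs i" using gs_anti il lk by blast
  have "f (br (br x z) u) = 0" if u: "u \<in> gs l" for u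
  proof -
    have J: "br x (br z u) + br z (br u x) + br u (br x z) = 0" by (rule jacobi)
    have e1: "f (br x (br z u)) = 0"
      using x gs_ideal[OF lk u, of z] sub by (auto simp: V_mem)
    have "br x u \<in> gs l" using gs_ideal[OF lk u] .
    then have "br u x \<in> gs l" using br_anti[of u x] subspace_neg[OF gs_sub[OF lk]] by metis
    then have e2: "f (br z (br u x)) = 0" using z by (auto simp: V_mem)
    have "br u (br x z) = - (br x (br z u) + br z (br u x))"
      using J by (metis add.commute eq_neg_iff_add_eq_0)
    have "br (br x z) u = - br u (br x z)" by (rule br_anti)
    also have "\<dots> = br x (br z u) + br z (br u x)"
      unfolding \<open>br u (br x z) = - (br x (br z u) + br z (br u x))\<close> by (rule minus_minus)
    finally have "br (br x z) u = br x (br z u) + br z (br u x)" .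
    then show ?thesis using e1 e2 lf_add[OF f] by simp
  qed
  then show ?thesis using xz by (simp add: V_mem)
qed

lemma Q_bracket:
  assumes f: "lf f" and ik: "i < k" and x: "x \<in> V i f" and z: "z \<in> Q (Suc i) f"
  shows "br x z \<in> Q (Suc i) f"
  using z unfolding Q_def
proof (induction rule: span_induct_alt)
  case base then show ?case by (simp add: br_0R span_zero)
next
  case (step c a y)
  then obtain l where l: "l \<in> {Suc i..k}" "a \<in> V l f" by blast
  then have "br x a \<in> V l f" using V_bracket[OF f _ _ x] by auto
  then have "br x a \<in> span (\<Union>j\<in>{Suc i..k}. V j f)" using l by (meson UN_I span_base)
  then show ?case using step by (simp add: br_addR br_scaleR span_add span_scale)
qed

lemma codim:
  assumes ik: "i < k" and w: "w \<in> gs i" "w \<notin> gs (Suc i)" and v: "v \<in> gs i"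
  shows "\<exists>c. v - scale c w \<in> gs (Suc i)"
proof -
  have S: "subspace (gs (Suc i))" using gs_sub ik by simp
  have Si: "subspace (gs i)" using gs_sub ik by simp
  have "w \<notin> span (gs (Suc i))" using w S by (metis span_eq_iff)
  then have d: "dim (insert w (gs (Suc i))) = dim (gs (Suc i)) + 1" by (simp add: dim_insert)
  have sub: "insert w (gs (Suc i)) \<subseteq> gs i" using w gs_mono ik by blast
  have "span (insert w (gs (Suc i))) = span (gs i)"
    by (rule dim_eq_span[OF sub]) (use d gs_dim[OF ik] in simp)
  moreover have "span (gs i) = gs i" using Si by (metis span_eq_iff)
  ultimately have "v \<in> span (insert w (gs (Suc i)))" using v by simp
  then obtain c where "v - scale c w \<in> span (gs (Suc i))" by (auto simp: span_breakdown_eq)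
  then show ?thesis using S by (metis span_eq_iff)
qed

lemma KL:
  assumes fin: "finite \<Phi>"
  shows "(\<forall>\<phi>\<in>\<Phi>. lf \<phi>) \<Longrightarrow> lf \<psi> \<Longrightarrow> subspace U \<Longrightarrow>
    (\<forall>u\<in>U. (\<forall>\<phi>\<in>\<Phi>. \<phi> u = 0) \<longrightarrow> \<psi> u = 0) \<Longrightarrow>
    \<exists>c. \<forall>u\<in>U. \<psi> u = (\<Sum>\<phi>\<in>\<Phi>. c \<phi> * \<phi> u)"
  using fin
proof (induction \<Phi> arbitrary: U rule: finite_induct)
  case empty then show ?case by simp
next
  case (insert \<phi> \<Phi> U)
  show ?case
  proof (cases "\<forall>u\<in>U. \<phi> u = 0")
    case True
    then have "\<forall>u\<in>U. (\<forall>\<chi>\<in>\<Phi>. \<chi> u = 0) \<longrightarrow> \<psi> u = 0" using insert.prems by auto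
    then obtain c where c: "\<forall>u\<in>U. \<psi> u = (\<Sum>\<chi>\<in>\<Phi>. c \<chi> * \<chi> u)"
      using insert.IH insert.prems by blast
    show ?thesis
      by (rule exI[of _ c]) (use c True insert.hyps in simp)
  next
    case False
    then obtain u0 where u0: "u0 \<in> U" "\<phi> u0 \<noteq> 0" by blast
    have lphi: "lf \<phi>" using insert.prems by simp
    define U' where "U' = {u \<in> U. \<phi> u = 0}"
    have sU': "subspace U'"
      using insert.prems(3) lf_add[OF lphi] lf_scale[OF lphi] lf_0[OF lphi]
      unfolding U'_def subspace_def by auto
    have "\<forall>u\<in>U'. (\<forall>\<chi>\<in>\<Phi>. \<chi> u = 0) \<longrightarrow> \<psi> u = 0" using insert.prems unfolding U'_def by auto
    then obtain c where c: "\<forall>u\<in>U'. \<psi> u = (\<Sum>\<chi>\<in>\<Phi>. c \<chi> * \<chi> u)"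
      using insert.IH insert.prems sU' by blast
    define a where "a = (\<psi> u0 - (\<Sum>\<chi>\<in>\<Phi>. c \<chi> * \<chi> u0)) / \<phi> u0"
    show ?thesis
    proof (rule exI[of _ "c(\<phi> := a)"], intro ballI)
      fix u assume u: "u \<in> U"
      define t where "t = \<phi> u / \<phi> u0"
      have u'U: "u - scale t u0 \<in> U" using u u0 insert.prems(3) by (simp add: subspace_diff subspace_scale)
      have "\<phi> (u - scale t u0) = 0"
        using u0 by (simp add: lf_diff[OF lphi] lf_scale[OF lphi] t_def)
      then have "u - scale t u0 \<in> U'" using u'U U'_def by simp
      then have e: "\<psi> (u - scale t u0) = (\<Sum>\<chi>\<in>\<Phi>. c \<chi> * \<chi> (u - scale t u0))" using c by blast
      have lchi: "\<And>\<chi>. \<chi> \<in> \<Phi> \<Longrightarrow> lf \<chi>" using insert.prems by simp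
      have "(\<Sum>\<chi>\<in>\<Phi>. c \<chi> * \<chi> (u - scale t u0)) = (\<Sum>\<chi>\<in>\<Phi>. c \<chi> * \<chi> u) - t * (\<Sum>\<chi>\<in>\<Phi>. c \<chi> * \<chi> u0)"
        by (simp add: lf_diff[OF lchi] lf_scale[OF lchi] algebra_simps sum_subtractf sum_distrib_left
            cong: sum.cong)
      moreover have "\<psi> u = \<psi> (u - scale t u0) + t * \<psi> u0"
        using lf_diff[OF insert.prems(2), of u "scale t u0"] lf_scale[OF insert.prems(2)] by simp
      ultimately have "\<psi> u = (\<Sum>\<chi>\<in>\<Phi>. c \<chi> * \<chi> u) + t * (\<psi> u0 - (\<Sum>\<chi>\<in>\<Phi>. c \<chi> * \<chi> u0))"
        using e by (simp add: algebra_simps)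
      also have "t * (\<psi> u0 - (\<Sum>\<chi>\<in>\<Phi>. c \<chi> * \<chi> u0)) = a * \<phi> u"
        using u0 by (simp add: t_def a_def field_simps)
      finally have "\<psi> u = a * \<phi> u + (\<Sum>\<chi>\<in>\<Phi>. c \<chi> * \<chi> u)" by simp
      moreover have "(\<Sum>\<chi>\<in>\<Phi>. (c(\<phi> := a)) \<chi> * \<chi> u) = (\<Sum>\<chi>\<in>\<Phi>. c \<chi> * \<chi> u)"
        using insert.hyps by (intro sum.cong) auto
      ultimately show "\<psi> u = (\<Sum>\<chi>\<in>insert \<phi> \<Phi>. (c(\<phi> := a)) \<chi> * \<chi> u)"
        using insert.hyps by simp
    qed
  qed
qed


lemma br_sum:
  assumes f: "lf f" and fin: "finite A"
  shows "f (br (\<Sum>a\<in>A. scale (c a) (v a)) u) = (\<Sum>a\<in>A. c a * f (br (v a) u))"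
  using fin by (induction A rule: finite_induct)
    (simp_all add: br_0L lf_0[OF f] br_addL br_scaleL lf_add[OF f] lf_scale[OF f])

lemma span_radical:
  assumes f: "lf f" and y: "y \<in> span Bs" and h: "\<forall>b\<in>Bs. f (br b u) = 0"
  shows "f (br y u) = 0"
  using y
proof (induction rule: span_induct_alt)
  case base then show ?case by (simp add: br_0L lf_0[OF f])
next
  case (step c x y) then show ?case using h by (simp add: br_addL br_scaleL lf_add[OF f] lf_scale[OF f])
qed

lemma Key:
  assumes f: "lf f" and ik: "i < k" and Vsub: "V i f \<subseteq> gs (Suc i)"
    and w: "w \<in> gs i" "w \<notin> gs (Suc i)" and orth: "\<forall>z\<in>V (Suc i) f. f (br w z) = 0"
  shows False
proof -
  let ?U = "gs (Suc i)"
  have sU: "subspace ?U" using gs_sub ik by simp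
  obtain Bs where Bs: "finite Bs" "Bs \<subseteq> ?U" "span Bs = ?U"
    using basis_subspace_exists[OF sU] by metis
  define \<Phi> where "\<Phi> = (\<lambda>b u. f (br b u)) ` Bs"
  have lfb: "lf (\<lambda>u. f (br b u))" for b
    by (simp add: lf_def br_addR br_scaleR lf_add[OF f] lf_scale[OF f])
  have cond: "\<forall>u\<in>?U. (\<forall>\<phi>\<in>\<Phi>. \<phi> u = 0) \<longrightarrow> f (br w u) = 0"
  proof (intro ballI impI)
    fix u assume u: "u \<in> ?U" and h: "\<forall>\<phi>\<in>\<Phi>. \<phi> u = 0"
    then have "\<forall>b\<in>Bs. f (br b u) = 0" unfolding \<Phi>_def by auto
    then have "\<forall>y\<in>?U. f (br y u) = 0" using span_radical[OF f] Bs(3) by blast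
    then have "u \<in> V (Suc i) f" using u by (simp add: V_mem br_anti[of u] lf_neg[OF f])
    then show "f (br w u) = 0" using orth by blast
  qed
  obtain c where c: "\<forall>u\<in>?U. f (br w u) = (\<Sum>\<phi>\<in>\<Phi>. c \<phi> * \<phi> u)"
    using KL[of \<Phi> "\<lambda>u. f (br w u)" ?U] Bs(1) cond sU lfb unfolding \<Phi>_def by blast
  define bb where "bb \<phi> = (SOME b. b \<in> Bs \<and> \<phi> = (\<lambda>u. f (br b u)))" for \<phi>
  have bb: "bb \<phi> \<in> Bs \<and> \<phi> = (\<lambda>u. f (br (bb \<phi>) u))" if "\<phi> \<in> \<Phi>" for \<phi>
    using that unfolding \<Phi>_def bb_def by (rule imageE) (rule someI, blast)
  define y1 where "y1 = (\<Sum>\<phi>\<in>\<Phi>. scale (c \<phi>) (bb \<phi>))"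
  have finP: "finite \<Phi>" using Bs(1) \<Phi>_def by simp
  have y1U: "y1 \<in> ?U" unfolding y1_def
    using bb Bs(2) by (intro subspace_sum[OF sU] subspace_scale[OF sU]) blast
  have y1: "f (br y1 u) = f (br w u)" if "u \<in> ?U" for u
  proof -
    have "f (br y1 u) = (\<Sum>\<phi>\<in>\<Phi>. c \<phi> * f (br (bb \<phi>) u))"
      unfolding y1_def by (rule br_sum[OF f finP])
    also have "\<dots> = (\<Sum>\<phi>\<in>\<Phi>. c \<phi> * \<phi> u)"
    proof (rule sum.cong[OF refl])
      fix \<phi> assume "\<phi> \<in> \<Phi>"
      then have "\<phi> u = f (br (bb \<phi>) u)" using bb by metis
      then show "c \<phi> * f (br (bb \<phi>) u) = c \<phi> * \<phi> u" by simp
    qed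
    finally show ?thesis using c that by simp
  qed
  define x where "x = w - y1"
  have Si: "subspace (gs i)" using gs_sub ik by simp
  have xi: "x \<in> gs i" unfolding x_def using w y1U gs_mono[OF ik] Si by (auto intro: subspace_diff)
  have xn: "x \<notin> ?U"
  proof
    assume "x \<in> ?U"
    then have "x + y1 \<in> ?U" using y1U sU by (simp add: subspace_add)
    then show False using w unfolding x_def by simp
  qed
  have xU: "f (br x u) = 0" if "u \<in> ?U" for u
    using y1[OF that] by (simp add: x_def br_diffL lf_diff[OF f])
  have "f (br x v) = 0" if v: "v \<in> gs i" for v
  proof -
    obtain d where d: "v - scale d x \<in> ?U" using codim[OF ik xi xn v] by blast
    have "br x v = br x (v - scale d x) + scale d (br x x)"
      by (simp add: br_diffR br_scaleR)
    then show ?thesis using xU[OF d] by (simp add: br_self lf_add[OF f] lf_scale[OF f] lf_0[OF f])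
  qed
  then have "x \<in> V i f" using xi by (simp add: V_mem)
  then show False using Vsub xn by blast
qed


lemma LG:
  assumes "i \<le> k"
  shows "\<forall>f w. lf f \<longrightarrow> w \<in> gs i \<longrightarrow> (\<forall>z\<in>Q i f. f (br w z) = 0) \<longrightarrow> w \<in> Q i f"
  using assms
proof (induction i rule: inc_induct)
  case base
  then show ?case using gsk by (auto simp: Q_def span_zero)
next
  case (step i)
  show ?case
  proof (intro allI impI)
    fix f w assume f: "lf f" and w: "w \<in> gs i" and orth: "\<forall>z\<in>Q i f. f (br w z) = 0"
    have ik: "i < k" using step(2) by assumption
    have Qm: "Q (Suc i) f \<subseteq> Q i f" using Q_mono[OF ik] .
    have Si: "subspace (gs i)" using gs_sub ik by simp
    have S1: "subspace (gs (Suc i))" using gs_sub ik by simp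
    show "w \<in> Q i f"
    proof (cases "w \<in> gs (Suc i)")
      case True
      have "\<forall>z\<in>Q (Suc i) f. f (br w z) = 0" using orth Qm by blast
      then have "w \<in> Q (Suc i) f" using step.IH[rule_format, OF f True] by blast
      then show ?thesis using Qm by blast
    next
      case wn: False
      show ?thesis
      proof (cases "V i f \<subseteq> gs (Suc i)")
        case True
        have "\<forall>z\<in>V (Suc i) f. f (br w z) = 0"
          using orth V_Q[of "Suc i" f] Qm ik by auto
        then show ?thesis using Key[OF f ik True w wn] by blast
      next
        case False
        then obtain x where x: "x \<in> V i f" "x \<notin> gs (Suc i)" by blast
        have xi: "x \<in> gs i" using x V_sub by blast
        obtain c where c: "w - scale c x \<in> gs (Suc i)" using codim[OF ik xi x(2) w] by blast
        have "\<forall>z\<in>Q (Suc i) f. f (br (w - scale c x) z) = 0"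
        proof
          fix z assume z: "z \<in> Q (Suc i) f"
          have "z \<in> gs i" using z Q_sub[of "Suc i" f] ik gs_mono[OF ik] by auto
          then have "f (br x z) = 0" using x by (simp add: V_mem)
          moreover have "f (br w z) = 0" using orth z Qm by blast
          ultimately show "f (br (w - scale c x) z) = 0"
            by (simp add: br_diffL br_scaleL lf_diff[OF f] lf_scale[OF f])
        qed
        then have "w - scale c x \<in> Q (Suc i) f" using step.IH[rule_format, OF f c] by blast
        then have a1: "w - scale c x \<in> Q i f" using Qm by blast
        have "x \<in> Q i f" using x V_Q[of i f] ik by auto
        then have a2: "scale c x \<in> Q i f" unfolding Q_def by (rule span_scale)
        have "(w - scale c x) + scale c x \<in> Q i f"
          using a1 a2 unfolding Q_def by (rule span_add)
        then show ?thesis by simp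
      qed
    qed
  qed
qed

lemma Step:
  assumes f: "lf f" and g: "lf g" and ik: "i < k"
    and QQ: "Q (Suc i) g = Q (Suc i) f" and fg: "\<forall>x\<in>Q (Suc i) f. g x = f x"
  shows "V i g \<subseteq> span (V i f \<union> Q (Suc i) f)"
proof
  fix x' assume x': "x' \<in> V i g"
  have x'i: "x' \<in> gs i" using x' V_sub by blast
  have qsub: "Q (Suc i) f \<subseteq> gs i" using Q_sub[of "Suc i" f] ik gs_mono[OF ik] by auto
  show "x' \<in> span (V i f \<union> Q (Suc i) f)"
  proof (cases "x' \<in> gs (Suc i)")
    case True
    then have "x' \<in> V (Suc i) g" using x' gs_mono[OF ik] by (auto simp: V_mem)
    then have "x' \<in> Q (Suc i) f" using V_Q[of "Suc i" g] ik QQ by auto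
    then show ?thesis by (auto intro: span_base)
  next
    case xn: False
    show ?thesis
    proof (cases "V i f \<subseteq> gs (Suc i)")
      case True
      have "\<forall>z\<in>V (Suc i) f. f (br x' z) = 0"
      proof
        fix z assume z: "z \<in> V (Suc i) f"
        then have zq: "z \<in> Q (Suc i) g" using V_Q[of "Suc i" f] ik QQ by auto
        then have "br x' z \<in> Q (Suc i) f" using Q_bracket[OF g ik x'] QQ by auto
        then have "f (br x' z) = g (br x' z)" using fg by simp
        also have "\<dots> = 0" using x' zq QQ qsub by (auto simp: V_mem)
        finally show "f (br x' z) = 0" .
      qed
      then show ?thesis using Key[OF f ik True x'i xn] by blast
    next
      case False
      then obtain x where x: "x \<in> V i f" "x \<notin> gs (Suc i)" by blast
      have xi: "x \<in> gs i" using x V_sub by blast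
      obtain c where c: "x' - scale c x \<in> gs (Suc i)" using codim[OF ik xi x(2) x'i] by blast
      have "\<forall>z\<in>Q (Suc i) g. g (br (x' - scale c x) z) = 0"
      proof
        fix z assume z: "z \<in> Q (Suc i) g"
        then have zf: "z \<in> Q (Suc i) f" using QQ by simp
        have "g (br x' z) = 0" using x' zf qsub by (auto simp: V_mem)
        moreover have "g (br x z) = 0"
        proof -
          have "br x z \<in> Q (Suc i) f" using Q_bracket[OF f ik x(1) zf] .
          then have "g (br x z) = f (br x z)" using fg by simp
          also have "\<dots> = 0" using x zf qsub by (auto simp: V_mem)
          finally show ?thesis .
        qed
        ultimately show "g (br (x' - scale c x) z) = 0"
          by (simp add: br_diffL br_scaleL lf_diff[OF g] lf_scale[OF g])
      qed
      then have "x' - scale c x \<in> Q (Suc i) g" using LG[of "Suc i", rule_format, OF _ g c] ik by simp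
      then have "x' - scale c x \<in> span (V i f \<union> Q (Suc i) f)" using QQ by (auto intro: span_base)
      moreover have "scale c x \<in> span (V i f \<union> Q (Suc i) f)" using x by (auto intro: span_base span_scale)
      ultimately have "(x' - scale c x) + scale c x \<in> span (V i f \<union> Q (Suc i) f)" by (rule span_add)
      then show ?thesis by simp
    qed
  qed
qed

lemma Main:
  assumes "i \<le> k"
  shows "\<forall>f g. lf f \<longrightarrow> lf g \<longrightarrow> (\<forall>x\<in>Q i f. g x = f x) \<longrightarrow> Q i g = Q i f"
  using assms
proof (induction i rule: inc_induct)
  case base
  show ?case
  proof (intro allI impI)
    fix f g :: "'v \<Rightarrow> 'k" assume f: "lf f" and g: "lf g"
    have Vk: "V k h = {0}" if h: "lf h" for h :: "'v \<Rightarrow> 'k"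
    proof
      show "V k h \<subseteq> {0}" using V_sub gsk by blast
      show "{0} \<subseteq> V k h" using gsk lf_0[OF h] by (simp add: V_mem br_0L)
    qed
    show "Q k g = Q k f" unfolding Q_def using Vk[OF f] Vk[OF g] by simp
  qed
next
  case (step i)
  show ?case
  proof (intro allI impI)
    fix f g assume f: "lf f" and g: "lf g" and fg: "\<forall>x\<in>Q i f. g x = f x"
    have ik: "i < k" using step(2) by assumption
    have fg1: "\<forall>x\<in>Q (Suc i) f. g x = f x" using fg Q_mono[OF ik] by blast
    have QQ: "Q (Suc i) g = Q (Suc i) f" using mp[OF mp[OF mp[OF step.IH[THEN spec[of _ f], THEN spec[of _ g]] f] g] fg1] .
    have fg2: "\<forall>x\<in>Q (Suc i) g. f x = g x" using fg1 QQ by simp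
    have A: "V i g \<subseteq> span (V i f \<union> Q (Suc i) f)" using Step[OF f g ik QQ fg1] .
    have B: "V i f \<subseteq> span (V i g \<union> Q (Suc i) g)" using Step[OF g f ik QQ[symmetric] fg2] .
    have C1: "Q (Suc i) f \<subseteq> span (V i f \<union> Q (Suc i) f)"
      using span_superset[of "V i f \<union> Q (Suc i) f"] by blast
    have C2: "Q (Suc i) f \<subseteq> span (V i g \<union> Q (Suc i) f)"
      using span_superset[of "V i g \<union> Q (Suc i) f"] by blast
    have "V i g \<union> Q (Suc i) f \<subseteq> span (V i f \<union> Q (Suc i) f)" using A C1 by (rule Un_least)
    then have "span (V i g \<union> Q (Suc i) f) \<subseteq> span (V i f \<union> Q (Suc i) f)"
      by (rule span_minimal) (rule subspace_span)
    moreover have "V i f \<union> Q (Suc i) f \<subseteq> span (V i g \<union> Q (Suc i) f)"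
      using B C2 unfolding QQ by (rule Un_least)
    then have "span (V i f \<union> Q (Suc i) f) \<subseteq> span (V i g \<union> Q (Suc i) f)"
      by (rule span_minimal) (rule subspace_span)
    ultimately have "span (V i g \<union> Q (Suc i) g) = span (V i f \<union> Q (Suc i) f)"
      unfolding QQ by (rule equalityI)
    then show "Q i g = Q i f" unfolding Q_step[OF ik, of g] Q_step[OF ik, of f] .
  qed
qed

end


theorem theorem3p7:
  fixes scale :: "'k::field_char_0 \<Rightarrow> 'v::ab_group_add \<Rightarrow> 'v"
    and br :: "'v \<Rightarrow> 'v \<Rightarrow> 'v"
    and gs :: "nat \<Rightarrow> 'v set" and k :: nat
    and f :: "'v \<Rightarrow> 'k"
  assumes "lie_algebra scale br"
    and "fin_dim scale"
    and "solvable scale br"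
    and "filtration scale br gs k"
    and "f \<in> dual scale"
  shows "classR scale br gs k f =
           {g \<in> dual scale. \<forall>x\<in>pv scale br gs k f. g x = f x}
         \<and> (\<forall>g\<in>dual scale. (\<forall>x\<in>pv scale br gs k f. g x = f x)
               \<longrightarrow> pv scale br gs k g = pv scale br gs k f)"
proof -
  have vs: "vector_space scale" using assms(1) by (simp add: lie_algebra_def)
  have linR: "\<And>x. Vector_Spaces.linear scale scale (br x)"
    and linL: "\<And>y. Vector_Spaces.linear scale scale (\<lambda>x. br x y)"
    using assms(1) by (auto simp: lie_algebra_def)
  obtain B where B: "finite B" "module.span scale B = UNIV"
    using assms(2) by (auto simp: fin_dim_def)
  obtain B' where B': "B' \<subseteq> B" "\<not> module.dependent scale B'" "B \<subseteq> module.span scale B'"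
    using vector_space.maximal_independent_subset[OF vs, of B] by blast
  have spanB': "module.span scale B' = UNIV"
  proof -
    have md: "module scale" using vs by (simp add: vector_space_def module_def)
    have "module.span scale B \<subseteq> module.span scale (module.span scale B')"
      using module.span_mono[OF md B'(3)] .
    then show ?thesis using B(2) module.span_span[OF md, of B'] by auto
  qed
  have fdv: "finite_dimensional_vector_space scale B'"
    unfolding finite_dimensional_vector_space_def finite_dimensional_vector_space_axioms_def
    using vs B'(1,2) B(1) spanB' finite_subset by blast
  have filt: "gs 0 = UNIV" "gs k = {0}" "\<And>i. i \<le> k \<Longrightarrow> lie_ideal scale br (gs i)"
    "\<And>i. i < k \<Longrightarrow> gs (Suc i) \<subseteq> gs i \<and>
            vector_space.dim scale (gs i) \<le> vector_space.dim scale (gs (Suc i)) + 1"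
    using assms(4) unfolding filtration_def by auto
  interpret L: LF scale B' br gs k
  proof (rule LF.intro[OF fdv], unfold_locales)
    fix x y z :: 'v and c :: 'k and i :: nat
    show "br (x + y) z = br x z + br y z" using linL[of z] by (simp add: Vector_Spaces.linear_iff)
    show "br x (y + z) = br x y + br x z" using linR[of x] by (simp add: Vector_Spaces.linear_iff)
    show "br (scale c x) y = scale c (br x y)" using linL[of y] by (simp add: Vector_Spaces.linear_iff)
    show "br x (scale c y) = scale c (br x y)" using linR[of x] by (simp add: Vector_Spaces.linear_iff)
    show "br x x = 0" using assms(1) by (simp add: lie_algebra_def)
    show "br x (br y z) + br y (br z x) + br z (br x y) = 0" using assms(1) by (simp add: lie_algebra_def)
    show "gs 0 = UNIV" "gs k = {0}" by (rule filt(1), rule filt(2))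
    show "i \<le> k \<Longrightarrow> module.subspace scale (gs i)" using filt(3) by (simp add: lie_ideal_def)
    show "i \<le> k \<Longrightarrow> y \<in> gs i \<Longrightarrow> br x y \<in> gs i" using filt(3) by (simp add: lie_ideal_def)
    show "i < k \<Longrightarrow> gs (Suc i) \<subseteq> gs i" using filt(4) by simp
    show "i < k \<Longrightarrow> vector_space.dim scale (gs i) \<le> vector_space.dim scale (gs (Suc i)) + 1"
      using filt(4) by simp
  qed
  have lfd: "L.lf g" if "g \<in> dual scale" for g
    using that by (simp add: dual_def Vector_Spaces.linear_iff L.lf_def)
  have pvQ: "pv scale br gs k g = L.Q 0 g" for g
    by (simp add: pv_def L.Q_def L.V_def)
  have M: "pv scale br gs k g = pv scale br gs k f"
    if "g \<in> dual scale" "\<forall>x\<in>pv scale br gs k f. g x = f x" for g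
    using L.Main[of 0] lfd[OF that(1)] lfd[OF assms(5)] that(2) unfolding pvQ by blast
  show ?thesis
  proof
    show "classR scale br gs k f = {g \<in> dual scale. \<forall>x\<in>pv scale br gs k f. g x = f x}"
      unfolding classR_def relR_def using M by auto
    show "\<forall>g\<in>dual scale. (\<forall>x\<in>pv scale br gs k f. g x = f x)
               \<longrightarrow> pv scale br gs k g = pv scale br gs k f" using M by blast
  qed
qed

end
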